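(* Let $n$ be even and let $\mathrm{TH}_{n/2}:\{0,1\}^n\rightarrow\{0,1\}$ be defined by $\mathrm{TH}_{n/2}(x)=1$ iff $|x|>n/2$. Then $WUC(\mathrm{TH}_{n/2})=O(\log n)$ while $\overline{s}(\mathrm{TH}_{n/2})=\Omega(\sqrt{n})$.
   Context: $|x|$ is the Hamming weight. A classical randomized query algorithm adaptively queries input bits $x_i$ (each query costs one) and outputs a bit; for an algorithm whose minimum over inputs of the probability of outputting $f(x)$ is $p>1/2$, its bias is $\beta=p-1/2$ and its weakly unbounded cost is (number of queries) $+\log(1/(2\beta))$; $WUC(f)$ is the minimum weakly unbounded cost over classical randomized algorithms. The sensitivity of $f$ at $x$ is $s_x(f)=\sum_{i\in[n]}|f(x)-f(x\oplus e_i)|$, where $e_i$ has a 1 exactly in position $i$, and the average sensitivity is $\overline{s}(f)=2^{-n}\sum_{x\in\{0,1\}^n}s_x(f)$. $\log$ is base 2. *)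

theory Defs
  imports "HOL-Probability.Probability"
begin

text \<open>Inputs in {0,1}^n are boolean lists of length n; True encodes the bit 1.\<close>

definition inputs :: "nat \<Rightarrow> bool list set" where
  "inputs n = {x. length x = n}"

definition hweight :: "bool list \<Rightarrow> nat" where
  "hweight x = length (filter id x)"

definition TH :: "nat \<Rightarrow> bool list \<Rightarrow> bool" where
  "TH n x \<longleftrightarrow> real (hweight x) > real n / 2"

datatype dtree = Leaf bool | Node nat dtree dtree

fun dt_eval :: "dtree \<Rightarrow> bool list \<Rightarrow> bool" where
  "dt_eval (Leaf b) x = b"
| "dt_eval (Node i l r) x = (if x ! i then dt_eval r x else dt_eval l x)"

fun dt_queries :: "dtree \<Rightarrow> bool list \<Rightarrow> nat" where
  "dt_queries (Leaf b) x = 0"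
| "dt_queries (Node i l r) x = Suc (dt_queries (if x ! i then r else l) x)"

fun dt_valid :: "nat \<Rightarrow> dtree \<Rightarrow> bool" where
  "dt_valid n (Leaf b) = True"
| "dt_valid n (Node i l r) = (i < n \<and> dt_valid n l \<and> dt_valid n r)"

text \<open>A classical randomized query algorithm is a probability distribution over
  deterministic decision trees (randomness may be fixed in advance).\<close>
definition succ_prob :: "dtree pmf \<Rightarrow> (bool list \<Rightarrow> bool) \<Rightarrow> bool list \<Rightarrow> real" where
  "succ_prob P f x = measure_pmf.prob P {T. dt_eval T x = f x}"

definition min_succ :: "nat \<Rightarrow> dtree pmf \<Rightarrow> (bool list \<Rightarrow> bool) \<Rightarrow> real" where
  "min_succ n P f = Min (succ_prob P f ` inputs n)"

text \<open>Weakly unbounded cost of f: infimum over randomized algorithms with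
  positive bias beta = p - 1/2 of (number of queries) + log(1/(2 beta)), where
  the number of queries is the worst case over inputs and random choices.\<close>
definition WUC :: "nat \<Rightarrow> (bool list \<Rightarrow> bool) \<Rightarrow> real" where
  "WUC n f = Inf {real q + log 2 (1 / (2 * (min_succ n P f - 1/2))) | P q.
      (\<forall>T\<in>set_pmf P. dt_valid n T) \<and>
      (\<forall>T\<in>set_pmf P. \<forall>x\<in>inputs n. dt_queries T x \<le> q) \<and>
      min_succ n P f > 1/2}"

definition sens_at :: "nat \<Rightarrow> (bool list \<Rightarrow> bool) \<Rightarrow> bool list \<Rightarrow> nat" where
  "sens_at n f x = card {i. i < n \<and> f x \<noteq> f (x[i := \<not> x ! i])}"

definition avg_sens :: "nat \<Rightarrow> (bool list \<Rightarrow> bool) \<Rightarrow> real" where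
  "avg_sens n f = (\<Sum>x\<in>inputs n. real (sens_at n f x)) / 2 ^ n"

end

theory Submission imports Defs begin

lemma hweight_cons[simp]: "hweight (b # x) = (if b then Suc (hweight x) else hweight x)"
  by (simp add: hweight_def)
lemma hweight_nil[simp]: "hweight [] = 0" by (simp add: hweight_def)

definition S :: "nat \<Rightarrow> nat \<Rightarrow> bool list set" where
  "S n k = {x. length x = n \<and> hweight x = k}"

lemma S0: "S n 0 = {replicate n False}"
proof (induction n)
  case 0 then show ?case by (auto simp: S_def)
next
  case (Suc n)
  show ?case
  proof
    show "S (Suc n) 0 \<subseteq> {replicate (Suc n) False}"
    proof
      fix x assume "x \<in> S (Suc n) 0"
      then obtain b y where x: "x = b # y" "length y = n" "hweight y = 0" "\<not> b"
        by (cases x) (auto simp: S_def split: if_splits)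
      then have "y \<in> S n 0" by (simp add: S_def)
      with Suc x show "x \<in> {replicate (Suc n) False}" by auto
    qed
  next
    show "{replicate (Suc n) False} \<subseteq> S (Suc n) 0"
      using Suc by (auto simp: S_def)
  qed
qed

lemma S_Suc_Suc: "S (Suc n) (Suc k) = (Cons False) ` S n (Suc k) \<union> (Cons True) ` S n k"
proof
  show "S (Suc n) (Suc k) \<subseteq> (Cons False) ` S n (Suc k) \<union> (Cons True) ` S n k"
  proof
    fix x assume "x \<in> S (Suc n) (Suc k)"
    then obtain b y where x: "x = b # y" "length y = n" "hweight (b#y) = Suc k"
      by (cases x) (auto simp: S_def)
    then show "x \<in> (Cons False) ` S n (Suc k) \<union> (Cons True) ` S n k"
      by (cases b) (auto simp: S_def)
  qed
qed (auto simp: S_def)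

lemma S_Suc0: "S 0 (Suc k) = {}" by (auto simp: S_def)

lemma card_S: "finite (S n k) \<and> card (S n k) = n choose k"
proof (induction n arbitrary: k)
  case 0 then show ?case by (cases k) (auto simp: S0 S_Suc0)
next
  case (Suc n)
  show ?case
  proof (cases k)
    case 0 then show ?thesis by (simp add: S0)
  next
    case (Suc j)
    have d: "(Cons False) ` S n (Suc j) \<inter> (Cons True) ` S n j = {}" by auto
    have "card (S (Suc n) (Suc j)) = card ((Cons False) ` S n (Suc j)) + card ((Cons True) ` S n j)"
      unfolding S_Suc_Suc using Suc.IH d by (simp add: card_Un_disjoint)
    also have "\<dots> = card (S n (Suc j)) + card (S n j)"
      by (simp add: card_image)
    finally show ?thesis using Suc.IH Suc by (simp add: S_Suc_Suc)
  qed
qed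

lemma central: "m \<ge> 1 \<Longrightarrow> 16 ^ m \<le> ((2*m) choose m)^2 * (4*m)"
proof (induction m rule: dec_induct)
  case base then show ?case by (simp add: numeral_eq_Suc)
next
  case (step m)
  have r: "((2*Suc m) choose Suc m) * (Suc m) = 2*(2*m+1) * ((2*m) choose m)"
  proof -
    have e1: "Suc (Suc (2*m)) * (Suc (2*m) choose m) = (Suc (Suc (2*m)) choose Suc m) * Suc m"
      by (rule Suc_times_binomial_eq)
    have e2: "Suc (2*m) * (2*m choose m) = (Suc (2*m) choose Suc m) * Suc m"
      by (rule Suc_times_binomial_eq)
    have e3: "Suc (2*m) choose Suc m = Suc (2*m) choose m"
      using binomial_symmetric[of "Suc m" "Suc (2*m)"] by simp
    have e4: "(2*Suc m) choose Suc m = Suc (Suc (2*m)) choose Suc m" by simp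
    define A where "A = Suc (Suc (2*m)) choose Suc m"
    define B where "B = Suc (2*m) choose m"
    define C0 where "C0 = 2*m choose m"
    have f1: "Suc (Suc (2*m)) * B = A * Suc m" using e1 by (simp only: A_def B_def)
    have f2: "Suc (2*m) * C0 = B * Suc m" using e2 e3 by (simp only: B_def C0_def)
    have "A * Suc m * Suc m = Suc (Suc (2*m)) * (B * Suc m)" using f1 by (simp only: mult.assoc[symmetric]) 
    also have "\<dots> = Suc (Suc (2*m)) * (Suc (2*m) * C0)" using f2 by simp
    also have "\<dots> = (2*(2*m+1) * C0) * Suc m" by (simp add: algebra_simps)
    finally have "A * Suc m * Suc m = (2*(2*m+1) * C0) * Suc m" .
    then have "A * Suc m = 2*(2*m+1) * C0" by (metis Suc_neq_Zero mult_right_cancel)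
    then show ?thesis using e4 by (simp only: A_def C0_def)
  qed
  define C where "C = (2*m) choose m"
  define D where "D = (2*Suc m) choose Suc m"
  have r': "D * Suc m = 2*(2*m+1)*C" using r by (simp add: C_def D_def)
  have IH: "16^m \<le> C^2*(4*m)" using step by (simp add: C_def)
  have "16^(Suc m) * (Suc m) \<le> 16 * (C^2*(4*m)) * Suc m" using mult_le_mono1[OF IH, of "16 * Suc m"] by (simp only: power_Suc mult_ac)
  also have "\<dots> \<le> 16 * C^2 * (2*m+1)^2"
  proof -
    have "4*m*Suc m \<le> (2*m+1)^2" by (simp add: power2_eq_square algebra_simps)
    then have "C^2 * (4*m*Suc m) \<le> C^2 * (2*m+1)^2" by simp
    then show ?thesis by (simp add: algebra_simps)
  qed
  also have "\<dots> = (D * Suc m)^2 * 4" using r' by (simp add: power2_eq_square algebra_simps)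
  also have "\<dots> = (D^2 * (4 * Suc m)) * Suc m" by (simp add: power2_eq_square algebra_simps)
  finally have "16^(Suc m) * Suc m \<le> (D^2 * (4 * Suc m)) * Suc m" .
  then have "16^(Suc m) \<le> D^2 * (4 * Suc m)" by (metis Suc_neq_Zero mult_le_cancel2 zero_less_Suc)
  then show ?case unfolding D_def .
qed

lemma hweight_update: "i < length x \<Longrightarrow>
  hweight (x[i:=v]) + (if x!i then 1 else 0) = hweight x + (if v then 1 else 0)"
proof (induction x arbitrary: i)
  case Nil then show ?case by simp
next
  case (Cons a x)
  show ?case
  proof (cases i)
    case 0 then show ?thesis by simp
  next
    case (Suc j)
    then have j: "j < length x" using Cons.prems by simp
    show ?thesis using Cons.IH[OF j] Suc by (cases "x!j"; cases v; cases a) auto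
  qed
qed

lemma hweight_card: "hweight x = card {i. i < length x \<and> x!i}"
  unfolding hweight_def by (simp add: length_filter_conv_card)

lemma sens_mid:
  assumes "x \<in> S (2*m) m"
  shows "sens_at (2*m) (TH (2*m)) x = m"
proof -
  have len: "length x = 2*m" and hw: "hweight x = m" using assms by (auto simp: S_def)
  have thx: "\<not> TH (2*m) x" by (simp add: TH_def hw)
  have "{i. i < 2*m \<and> TH (2*m) x \<noteq> TH (2*m) (x[i := \<not> x ! i])} = {i. i < 2*m \<and> \<not> x!i}"
  proof (intro Collect_cong conj_cong refl)
    fix i assume i: "i < 2*m"
    have u: "hweight (x[i := \<not> x ! i]) + (if x!i then 1 else 0) = m + (if \<not> x!i then 1 else 0)"
      using hweight_update[of i x "\<not> x!i"] i len hw by simp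
    show "(TH (2*m) x \<noteq> TH (2*m) (x[i := \<not> x ! i])) = (\<not> x!i)"
      using u thx by (cases "x!i") (auto simp: TH_def)
  qed
  moreover have "card {i. i < 2*m \<and> \<not> x!i} = m"
  proof -
    have "{i. i < 2*m \<and> \<not> x!i} = {..<2*m} - {i. i < 2*m \<and> x!i}" by auto
    moreover have "card {i. i < 2*m \<and> x!i} = m" using hweight_card[of x] len hw by simp
    moreover have "card ({..<2*m} - {i. i < 2*m \<and> x!i}) = card {..<2*m} - card {i. i < 2*m \<and> x!i}"
      by (rule card_Diff_subset) auto
    ultimately show ?thesis by simp
  qed
  ultimately show ?thesis by (simp add: sens_at_def)
qed

lemma finite_inputs: "finite (inputs n)"
  unfolding inputs_def using finite_lists_length_eq[of "UNIV::bool set" n] by simp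

lemma avg_lower: "avg_sens (2*m) (TH (2*m)) \<ge> real ((2*m) choose m) * m / 2^(2*m)"
proof -
  have sub: "S (2*m) m \<subseteq> inputs (2*m)" by (auto simp: S_def inputs_def)
  have "real ((2*m) choose m) * m = (\<Sum>x\<in>S (2*m) m. real (sens_at (2*m) (TH (2*m)) x))"
    using card_S[of "2*m" m] sens_mid by simp
  also have "\<dots> \<le> (\<Sum>x\<in>inputs (2*m). real (sens_at (2*m) (TH (2*m)) x))"
    by (rule sum_mono2[OF finite_inputs sub]) simp
  finally show ?thesis unfolding avg_sens_def by (simp add: divide_right_mono)
qed

lemma part2: "\<exists>c N. c > 0 \<and> (\<forall>n\<ge>N. even n \<longrightarrow> avg_sens n (TH n) \<ge> c * sqrt (real n))"
proof (intro exI conjI allI impI)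
  show "(1/4::real) > 0" by simp
  fix n :: nat assume n: "n \<ge> 2" "even n"
  then obtain m where nm: "n = 2*m" by (auto elim: evenE)
  with n have m1: "m \<ge> 1" by simp
  define B where "B = real ((2*m) choose m)"
  have c: "16^m \<le> B^2 * (4*m)"
    using central[OF m1] unfolding B_def by (metis of_nat_le_iff of_nat_mult of_nat_power of_nat_numeral)
  define A where "A = B * m / 2^(2*m)"
  have p: "(2::real)^(2*m) = 4^m" by (simp add: power_mult)
  have p2: "((2::real)^(2*m))^2 = 16^m"
  proof -
    have "((2::real)^(2*m))^2 = 2^(4*m)" by (simp flip: power_mult)
    also have "\<dots> = (2^4)^m" by (rule power_mult)
    finally show ?thesis by simp
  qed
  have A0: "A \<ge> 0" by (simp add: A_def B_def)
  have "A^2 = B^2 * m^2 / 16^m" by (simp add: A_def power_divide power_mult_distrib p2)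
  also have "\<dots> \<ge> m / 4"
  proof -
    have "16^m * m \<le> B^2 * (4*m) * m" using c by (simp add: mult_right_mono)
    then have "16^m * m / 4 \<le> B^2 * m^2" by (simp add: power2_eq_square algebra_simps)
    then show ?thesis by (simp add: field_simps)
  qed
  finally have mA: "m / 4 \<le> A^2" .
  have "(1/4 * sqrt (real n))^2 = real n / 16" by (simp add: power_mult_distrib power_divide)
  also have "\<dots> \<le> A^2" using mA nm by simp
  finally have "(1/4 * sqrt (real n))^2 \<le> A^2" .
  then have "1/4 * sqrt (real n) \<le> A" using A0 by (rule power2_le_imp_le)
  also have "A \<le> avg_sens n (TH n)" using avg_lower[of m] nm by (simp add: A_def B_def)
  finally show "1/4 * sqrt (real n) \<le> avg_sens n (TH n)" .
qed

lemma inputs_ne: "inputs n \<noteq> {}"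
  unfolding inputs_def by (metis (mono_tags) empty_Collect_eq length_replicate)

lemma min_succ_le1: "min_succ n P f \<le> 1"
proof -
  have "min_succ n P f \<in> succ_prob P f ` inputs n"
    unfolding min_succ_def using finite_inputs inputs_ne by (intro Min_in) auto
  then show ?thesis by (auto simp: succ_prob_def)
qed

lemma WUC_bdd: "bdd_below {real q + log 2 (1 / (2 * (min_succ n P f - 1/2))) | P q.
      (\<forall>T\<in>set_pmf P. dt_valid n T) \<and>
      (\<forall>T\<in>set_pmf P. \<forall>x\<in>inputs n. dt_queries T x \<le> q) \<and>
      min_succ n P f > 1/2}"
proof (rule bdd_belowI[of _ 0], clarify)
  fix P :: "dtree pmf" and q :: nat
  assume h: "min_succ n P f > 1/2"
  have "min_succ n P f \<le> 1" by (rule min_succ_le1)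
  then have "1 \<le> 1 / (2 * (min_succ n P f - 1/2))" using h by (simp add: field_simps)
  then have "log 2 1 \<le> log 2 (1 / (2 * (min_succ n P f - 1/2)))" by (intro log_mono) auto
  then have "0 \<le> log 2 (1 / (2 * (min_succ n P f - 1/2)))" by simp
  then show "0 \<le> real q + log 2 (1 / (2 * (min_succ n P f - 1/2)))" by simp
qed

definition gt :: "nat \<Rightarrow> nat \<Rightarrow> dtree" where
  "gt n k = (if k < n then Node k (Leaf False) (Leaf True) else Leaf False)"

definition Palg :: "nat \<Rightarrow> dtree pmf" where
  "Palg n = map_pmf (gt n) (pmf_of_set {0..n})"

lemma succ_Palg:
  assumes x: "x \<in> inputs n" and ev: "even n"
  shows "succ_prob (Palg n) (TH n) x \<ge> (real n + 2) / (2 * (real n + 1))"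
proof -
  have len: "length x = n" using x by (simp add: inputs_def)
  have "succ_prob (Palg n) (TH n) x = measure_pmf.prob (pmf_of_set {0..n}) {k. dt_eval (gt n k) x = TH n x}"
    unfolding succ_prob_def Palg_def by (simp add: vimage_def)
  also have "\<dots> = card ({0..n} \<inter> {k. dt_eval (gt n k) x = TH n x}) / card {0..n}"
    by (simp add: measure_pmf_of_set)
  finally have sp: "succ_prob (Palg n) (TH n) x = card ({0..n} \<inter> {k. dt_eval (gt n k) x = TH n x}) / (real n + 1)"
    by simp
  define h where "h = hweight x"
  have hc: "h = card {i. i < n \<and> x!i}" using hweight_card[of x] len by (simp add: h_def)
  have key: "2 * card ({0..n} \<inter> {k. dt_eval (gt n k) x = TH n x}) \<ge> n + 2"
  proof (cases "TH n x")
    case True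
    then have "real n < 2 * real h" by (simp add: TH_def h_def)
    then have "n < 2*h" by linarith
    with ev have h2: "n + 2 \<le> 2*h" by (auto elim!: evenE)
    have "{0..n} \<inter> {k. dt_eval (gt n k) x = TH n x} = {i. i < n \<and> x!i}"
      using True by (auto simp: gt_def)
    then show ?thesis using h2 hc by simp
  next
    case False
    then have "\<not> real n < 2 * real h" by (simp add: TH_def h_def)
    then have h2: "2*h \<le> n" by linarith
    have "{0..n} \<inter> {k. dt_eval (gt n k) x = TH n x} = insert n ({..<n} - {i. i < n \<and> x!i})"
      using False by (auto simp: gt_def)
    moreover have "card ({..<n} - {i. i < n \<and> x!i}) = n - h"
    proof -
      have "card ({..<n} - {i. i < n \<and> x!i}) = card {..<n} - card {i. i < n \<and> x!i}"
        by (rule card_Diff_subset) auto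
      then show ?thesis using hc by simp
    qed
    ultimately show ?thesis using h2 by simp
  qed
  show ?thesis
  proof -
    define c where "c = card ({0..n} \<inter> {k. dt_eval (gt n k) x = TH n x})"
    have "real n + 2 \<le> 2 * real c"
      using key unfolding c_def by linarith
    then have "(real n + 2) / (2 * (real n + 1)) \<le> (2 * real c) / (2 * (real n + 1))"
      by (rule divide_right_mono) simp
    also have "(2 * real c) / (2 * (real n + 1)) = real c / (real n + 1)"
      by (rule mult_divide_mult_cancel_left) simp
    finally have "(real n + 2) / (2 * (real n + 1)) \<le> real c / (real n + 1)" .
    then show ?thesis unfolding sp c_def .
  qed
qed

lemma part1: "\<exists>C N. C > 0 \<and> (\<forall>n\<ge>N. even n \<longrightarrow> WUC n (TH n) \<le> C * log 2 (real n))"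
proof (intro exI conjI allI impI)
  show "(3::real) > 0" by simp
  fix n :: nat assume n: "n \<ge> 2" "even n"
  define m where "m = min_succ n (Palg n) (TH n)"
  have mge: "m \<ge> (real n + 2) / (2 * (real n + 1))"
  proof -
    have a: "\<forall>x\<in>inputs n. (real n + 2) / (2 * (real n + 1)) \<le> succ_prob (Palg n) (TH n) x"
      using succ_Palg n(2) by blast
    show ?thesis
      unfolding m_def min_succ_def using finite_inputs inputs_ne a
      by (subst Min_ge_iff) auto
  qed
  have half: "(real n + 2) / (2 * (real n + 1)) > (1/2::real)" by (simp add: field_simps)
  have m12: "m > 1/2" using mge half by linarith
  have sp: "set_pmf (Palg n) = gt n ` {0..n}" unfolding Palg_def by simp
  have mem: "real 1 + log 2 (1 / (2 * (m - 1/2))) \<in> {real q + log 2 (1 / (2 * (min_succ n P (TH n) - 1/2))) | P q.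
      (\<forall>T\<in>set_pmf P. dt_valid n T) \<and>
      (\<forall>T\<in>set_pmf P. \<forall>x\<in>inputs n. dt_queries T x \<le> q) \<and>
      min_succ n P (TH n) > 1/2}"
    using m12 unfolding m_def
    by (intro CollectI exI[of _ "Palg n"] exI[of _ "1::nat"]) (auto simp: sp gt_def)
  have "WUC n (TH n) \<le> real 1 + log 2 (1 / (2 * (m - 1/2)))"
    unfolding WUC_def by (rule cInf_lower[OF mem WUC_bdd])
  also have "\<dots> \<le> 1 + log 2 (2 * real n)"
  proof -
    have "2 * (m - 1/2) \<ge> 1 / (real n + 1)"
    proof -
      have "2 * ((real n + 2) / (2 * (real n + 1)) - 1/2) = 1 / (real n + 1)" by (simp add: field_simps)
      moreover have "2 * ((real n + 2) / (2 * (real n + 1)) - 1/2) \<le> 2 * (m - 1/2)"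
        using mge by (intro mult_left_mono diff_right_mono) auto
      ultimately show ?thesis by simp
    qed
    then have "1 / (2 * (m - 1/2)) \<le> n + 1"
      using m12 by (simp add: field_simps)
    also have "\<dots> \<le> 2 * real n" using n by simp
    finally have "1 / (2 * (m - 1/2)) \<le> 2 * real n" .
    then have "log 2 (1 / (2 * (m - 1/2))) \<le> log 2 (2 * real n)"
      using m12 by (intro log_mono) auto
    then show ?thesis by simp
  qed
  also have "\<dots> = 2 + log 2 (real n)" using n by (simp add: log_mult)
  also have "\<dots> \<le> 3 * log 2 (real n)"
  proof -
    have "log 2 (real n) \<ge> log 2 2" using n by (intro log_mono) auto
    then show ?thesis by simp
  qed
  finally show "WUC n (TH n) \<le> 3 * log 2 (real n)" .
qed

theorem lemma11:
  shows "(\<exists>C N. C > 0 \<and> (\<forall>n\<ge>N. even n \<longrightarrow> WUC n (TH n) \<le> C * log 2 (real n)))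
       \<and> (\<exists>c N. c > 0 \<and> (\<forall>n\<ge>N. even n \<longrightarrow> avg_sens n (TH n) \<ge> c * sqrt (real n)))"
  using part1 part2 by blast

end
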